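(* Let $n\ge1$, $q$ a prime power, and let $(\mathsf{Enc},\mathcal{A})$ be any $n$-party one-round aggregation protocol over $\mathbb{F}_q$ in the anonymized model with encoder $\mathsf{Enc}:\mathbb{F}_q\to[\ell]^m$. Then for each $s\in\mathbb{F}_q$ there exist $\mathbf{x},\mathbf{x}'\in\mathcal{B}_s$ such that $$\mathrm{SD}\left(\mathcal{S}^{\mathsf{Enc}}_{\mathbf{x}},\mathcal{S}^{\mathsf{Enc}}_{\mathbf{x}'}\right)\ge1-\frac{n^{nm}}{q^{n-1}}.$$
   Context: $\mathcal{B}_s=\{\mathbf{x}\in\mathbb{F}_q^n:\sum_ix_i=s\}$; $\mathrm{SD}$ is statistical distance. An $n$-party one-round aggregation protocol over $\mathbb{F}_q$ with $m$ messages per party consists of a randomized encoder $\mathsf{Enc}:\mathbb{F}_q\to[\ell]^m$ (for some positive integer $\ell$; each party applies it to its input with independent randomness) and an analyzer $\mathcal{A}:[\ell]^{nm}\to\mathbb{F}_q$ such that for every $\mathbf{x}\in\mathbb{F}_q^n$, every possible realization of the encodings $\mathsf{Enc}(x_1),\dots,\mathsf{Enc}(x_n)$, and every permutation $\pi$ of $[nm]$, the analyzer applied to the concatenation $(\mathsf{Enc}(x_1),\dots,\mathsf{Enc}(x_n))$ with coordinates permuted by $\pi$ outputs $\sum_i x_i$. $\mathcal{S}^{\mathsf{Enc}}_{\mathbf{x}}$ is the distribution on $[\ell]^{nm}$ of this concatenation after applying an independent uniformly random permutation of the $nm$ coordinates. *)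

theory Defs
  imports "HOL-Probability.Probability" "HOL-Combinatorics.Permutations"
begin

definition msg_space :: "nat \<Rightarrow> nat \<Rightarrow> nat list set" where
  "msg_space l m = {e. length e = m \<and> (\<forall>y\<in>set e. y < l)}"

fun enc_all :: "('a \<Rightarrow> nat list pmf) \<Rightarrow> 'a list \<Rightarrow> nat list list pmf" where
  "enc_all Enc [] = return_pmf []"
| "enc_all Enc (x # xs) = bind_pmf (Enc x) (\<lambda>e. map_pmf (\<lambda>es. e # es) (enc_all Enc xs))"

definition is_aggregation_protocol ::
  "nat \<Rightarrow> nat \<Rightarrow> nat \<Rightarrow> ('a::field \<Rightarrow> nat list pmf) \<Rightarrow> (nat list \<Rightarrow> 'a) \<Rightarrow> bool" where
  "is_aggregation_protocol n m l Enc A \<longleftrightarrow>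
     0 < l \<and>
     (\<forall>x. set_pmf (Enc x) \<subseteq> msg_space l m) \<and>
     (\<forall>xs es \<pi>. length xs = n \<longrightarrow> length es = n \<longrightarrow>
        (\<forall>i<n. es ! i \<in> set_pmf (Enc (xs ! i))) \<longrightarrow>
        \<pi> permutes {..<n * m} \<longrightarrow>
        A (permute_list \<pi> (concat es)) = sum_list xs)"

definition B_set :: "nat \<Rightarrow> 'a::field \<Rightarrow> 'a list set" where
  "B_set n s = {xs. length xs = n \<and> sum_list xs = s}"

definition shuffled_view :: "nat \<Rightarrow> nat \<Rightarrow> ('a \<Rightarrow> nat list pmf) \<Rightarrow> 'a list \<Rightarrow> nat list pmf" where
  "shuffled_view n m Enc xs =
     bind_pmf (enc_all Enc xs) (\<lambda>es.
       map_pmf (\<lambda>\<pi>. permute_list \<pi> (concat es)) (pmf_of_set {\<pi>. \<pi> permutes {..<n * m}}))"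

definition stat_dist :: "'b pmf \<Rightarrow> 'b pmf \<Rightarrow> real" where
  "stat_dist P Q = (SUP E. \<bar>measure_pmf.prob P E - measure_pmf.prob Q E\<bar>)"

end

theory Submission imports Defs begin

lemma zr: "sum_list (replicate n (0::'a::comm_monoid_add)) = 0" by (induction n) auto

lemma sum_list_rep_upd:
  fixes a :: "'a::comm_monoid_add"
  shows "i < n \<Longrightarrow> sum_list ((replicate n 0)[i := a]) = a"
proof (induction n arbitrary: i)
  case 0 then show ?case by simp
next
  case (Suc n) then show ?case by (cases i) (auto simp: zr)
qed

lemma set_enc_all:
  "es \<in> set_pmf (enc_all Enc xs) \<Longrightarrow> length es = length xs \<and> (\<forall>i<length xs. es ! i \<in> set_pmf (Enc (xs ! i)))"
proof (induction xs arbitrary: es)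
  case Nil then show ?case by simp
next
  case (Cons x xs)
  then obtain e es' where "es = e # es'" "e \<in> set_pmf (Enc x)" "es' \<in> set_pmf (enc_all Enc xs)"
    by auto
  with Cons.IH[of es'] show ?case by (auto simp: nth_Cons split: nat.splits)
qed

lemma concat_nth_uniform:
  "(\<forall>e\<in>set es. length e = m) \<Longrightarrow> i < length es \<Longrightarrow> t < m \<Longrightarrow> concat es ! (i*m + t) = es ! i ! t"
proof (induction es arbitrary: i)
  case Nil then show ?case by simp
next
  case (Cons e es)
  show ?case
  proof (cases i)
    case 0 with Cons show ?thesis by (simp add: nth_append)
  next
    case (Suc j)
    then have "i*m + t = m + (j*m+t)" by simp
    with Cons Suc show ?thesis by (simp add: nth_append)
  qed
qed

lemma length_concat_uniform:
  "(\<forall>e\<in>set es. length e = m) \<Longrightarrow> length (concat es) = length es * m"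
  by (induction es) auto

lemma unique_input:
  assumes prot: "is_aggregation_protocol n m l Enc A"
    and i: "i < n"
    and e: "e \<in> set_pmf (Enc a)" and e': "e' \<in> set_pmf (Enc b)"
    and eq: "mset e = mset e'"
  shows "a = b"
proof -
  define x where "x = (replicate n (0::'a))[i := a]"
  define y where "y = (replicate n (0::'a))[i := b]"
  define es where "es = map (\<lambda>j. if j = i then e else (SOME f. f \<in> set_pmf (Enc (x!j)))) [0..<n]"
  define es' where "es' = es[i := e']"
  have lx: "length x = n" "length y = n" by (auto simp: x_def y_def)
  have les: "length es = n" "length es' = n" by (auto simp: es_def es'_def)
  have es_in: "\<forall>j<n. es ! j \<in> set_pmf (Enc (x ! j))"
  proof (intro allI impI)
    fix j assume j: "j < n"
    show "es ! j \<in> set_pmf (Enc (x ! j))"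
    proof (cases "j = i")
      case True with j e i show ?thesis by (simp add: es_def x_def)
    next
      case False
      have "\<exists>f. f \<in> set_pmf (Enc (x!j))" using set_pmf_not_empty by fast
      then show ?thesis using False j by (simp add: es_def) (metis someI_ex)
    qed
  qed
  have es'_in: "\<forall>j<n. es' ! j \<in> set_pmf (Enc (y ! j))"
  proof (intro allI impI)
    fix j assume j: "j < n"
    show "es' ! j \<in> set_pmf (Enc (y ! j))"
    proof (cases "j = i")
      case True with j e' i les show ?thesis by (simp add: es'_def y_def)
    next
      case False
      with es_in j have "es ! j \<in> set_pmf (Enc (x ! j))" by simp
      moreover have "x ! j = y ! j" using False by (simp add: x_def y_def)
      ultimately show ?thesis using False by (simp add: es'_def)
    qed
  qed
  have msp: "\<forall>x. set_pmf (Enc x) \<subseteq> msg_space l m" using prot by (simp add: is_aggregation_protocol_def)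
  have "\<forall>f\<in>set es. length f = m"
  proof
    fix f assume "f \<in> set es"
    then obtain j where "j < n" "f = es ! j" using les by (auto simp: in_set_conv_nth)
    with es_in msp show "length f = m" by (auto simp: msg_space_def)
  qed
  then have lc: "length (concat es) = n * m" using les length_concat_uniform by metis
  have "map mset es' = (map mset es)[i := mset e']" by (simp add: es'_def map_update)
  also have "\<dots> = (map mset es)[i := map mset es ! i]" using eq i les by (simp add: es_def)
  also have "\<dots> = map mset es" by (rule list_update_id)
  finally have me: "mset (concat es) = mset (concat es')" by (simp add: mset_concat)
  then have lc': "length (concat es') = n * m" using lc mset_eq_length by metis
  from me obtain p where p: "p permutes {..<length (concat es')}" "permute_list p (concat es') = concat es"
    by (metis mset_eq_permutation)
  have "A (permute_list id (concat es)) = sum_list x"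
    using prot lx les es_in permutes_id[of "{..<n*m}"] unfolding is_aggregation_protocol_def by blast
  then have ha: "A (concat es) = a" using i by (simp add: x_def sum_list_rep_upd permute_list_id)
  have "A (permute_list p (concat es')) = sum_list y"
  proof -
    have "\<forall>xs es \<pi>. length xs = n \<longrightarrow> length es = n \<longrightarrow>
        (\<forall>i<n. es ! i \<in> set_pmf (Enc (xs ! i))) \<longrightarrow>
        \<pi> permutes {..<n * m} \<longrightarrow> A (permute_list \<pi> (concat es)) = sum_list xs"
      using prot unfolding is_aggregation_protocol_def by blast
    then show ?thesis using lx les es'_in p lc' by metis
  qed
  then have "A (concat es) = b"
    using i p(2) by (simp add: y_def sum_list_rep_upd)
  with ha show ?thesis by simp
qed

lemma sv_support:
  assumes "v \<in> set_pmf (shuffled_view n m Enc x)" "length x = n"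
  shows "\<exists>es \<pi>. length es = n \<and> (\<forall>i<n. es!i \<in> set_pmf (Enc (x!i))) \<and> \<pi> permutes {..<n*m}
           \<and> v = permute_list \<pi> (concat es)"
proof -
  have fin: "finite {\<pi>. \<pi> permutes {..<n * m}}" by (simp add: finite_permutations)
  have ne: "{\<pi>. \<pi> permutes {..<n * m}} \<noteq> {}" using permutes_id by blast
  from assms(1) obtain es \<pi> where "es \<in> set_pmf (enc_all Enc x)" "\<pi> permutes {..<n*m}"
     "v = permute_list \<pi> (concat es)"
    unfolding shuffled_view_def using fin ne by auto
  with set_enc_all[of es Enc x] assms(2) show ?thesis by blast
qed

lemma part_mset:
  assumes les: "length es = n" and lm: "\<forall>e\<in>set es. length e = m"
    and p: "\<pi> permutes {..<n*m}" and v: "v = permute_list \<pi> (concat es)" and i: "i < n"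
  shows "mset (es!i) = image_mset ((!) v) (mset_set {j. j < n*m \<and> \<pi> j div m = i})"
proof -
  define S where "S = {j. j < n*m \<and> \<pi> j div m = i}"
  have lc: "length (concat es) = n*m" using length_concat_uniform[OF lm] les by simp
  have vj: "\<And>j. j < n*m \<Longrightarrow> v ! j = concat es ! \<pi> j"
    using v lc p by (simp add: permute_list_nth)
  have "image_mset ((!) v) (mset_set S) = image_mset (\<lambda>j. concat es ! \<pi> j) (mset_set S)"
    by (rule image_mset_cong) (simp add: S_def vj)
  also have "\<dots> = image_mset ((!) (concat es)) (image_mset \<pi> (mset_set S))"
    by (simp add: multiset.map_comp o_def)
  also have "image_mset \<pi> (mset_set S) = mset_set (\<pi> ` S)"
    by (rule image_mset_mset_set) (meson p permutes_inj inj_on_subset subset_UNIV)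
  also have "\<pi> ` S = {i*m..<i*m+m}"
  proof
    show "\<pi> ` S \<subseteq> {i*m..<i*m+m}"
    proof
      fix k assume "k \<in> \<pi> ` S"
      then obtain j where "j \<in> S" "k = \<pi> j" by auto
      then have kd: "k div m = i" and "j < n*m" by (auto simp: S_def)
      then have m: "m > 0" by (cases m) auto
      have e: "k = i*m + k mod m" using kd div_mult_mod_eq[of k m] by simp
      have "k mod m < m" using m by simp
      then show "k \<in> {i*m..<i*m+m}" using e by (metis atLeastLessThan_iff le_add1 nat_add_left_cancel_less)
    qed
  next
    show "{i*m..<i*m+m} \<subseteq> \<pi> ` S"
    proof
      fix k assume k: "k \<in> {i*m..<i*m+m}"
      then have kd: "k div m = i" by (auto intro: div_nat_eqI simp: mult.commute)
      have "i*m + m \<le> n*m" using i by (metis add.commute mult_Suc Suc_leI mult_le_mono1)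
      then have kl: "k < n*m" using k by auto
      have "inv \<pi> k < n*m" using p kl by (meson lessThan_iff permutes_inv permutes_in_image)
      moreover have "\<pi> (inv \<pi> k) = k" using p by (simp add: permutes_inverses(1))
      ultimately show "k \<in> \<pi> ` S" using kd unfolding S_def by (metis (mono_tags, lifting) image_eqI mem_Collect_eq)
    qed
  qed
  also have "mset_set {i*m..<i*m+m} = mset [i*m..<i*m+m]" by (simp add: mset_upt)
  also have "image_mset ((!) (concat es)) (mset [i*m..<i*m+m]) = mset (map ((!) (concat es)) [i*m..<i*m+m])"
    by simp
  also have "map ((!) (concat es)) [i*m..<i*m+m] = es ! i"
  proof (rule nth_equalityI)
    have "length (es!i) = m" using lm les i by auto
    then show "length (map ((!) (concat es)) [i*m..<i*m+m]) = length (es!i)" by simp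
    fix t assume "t < length (map ((!) (concat es)) [i*m..<i*m+m])"
    then have t: "t < m" by simp
    then show "map ((!) (concat es)) [i*m..<i*m+m] ! t = es ! i ! t"
      using concat_nth_uniform[OF lm, of i t] les i by simp
  qed
  finally show ?thesis by (simp add: S_def)
qed

lemma count_inputs:
  fixes Enc :: "'a::{finite,field} \<Rightarrow> nat list pmf"
  assumes prot: "is_aggregation_protocol n m l Enc A"
  shows "card {x. length x = n \<and> v \<in> set_pmf (shuffled_view n m Enc x)} \<le> n ^ (n*m)"
proof -
  define X where "X = {x. length x = n \<and> v \<in> set_pmf (shuffled_view n m Enc x)}"
  define G where "G = ({..<n*m} \<rightarrow>\<^sub>E {..<n})"
  define good where "good x g \<longleftrightarrow> (\<exists>es. length es = n \<and> (\<forall>i<n. es!i \<in> set_pmf (Enc (x!i)) \<and>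
        mset (es!i) = image_mset ((!) v) (mset_set {j. j<n*m \<and> g j = i})))" for x g
  define f where "f x = (SOME g. g \<in> G \<and> good x g)" for x
  have msp: "\<forall>x. set_pmf (Enc x) \<subseteq> msg_space l m" using prot by (simp add: is_aggregation_protocol_def)
  have ex: "\<exists>g. g \<in> G \<and> good x g" if "x \<in> X" for x
  proof -
    from that obtain es \<pi> where es: "length es = n" "\<forall>i<n. es!i \<in> set_pmf (Enc (x!i))"
      "\<pi> permutes {..<n*m}" "v = permute_list \<pi> (concat es)"
      using sv_support unfolding X_def by blast
    have lm: "\<forall>e\<in>set es. length e = m"
    proof
      fix e assume "e \<in> set es"
      then obtain j where "j < n" "e = es ! j" using es(1) by (auto simp: in_set_conv_nth)
      with es(2) msp show "length e = m" by (auto simp: msg_space_def)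
    qed
    define g where "g = restrict (\<lambda>j. \<pi> j div m) {..<n*m}"
    have "g \<in> G"
    proof -
      have "\<pi> j div m < n" if "j < n*m" for j
      proof -
        have "\<pi> j < n*m" using es(3) that by (meson lessThan_iff permutes_in_image)
        then show ?thesis by (metis less_mult_imp_div_less mult.commute)
      qed
      then show ?thesis by (auto simp: G_def g_def)
    qed
    moreover have "good x g"
      unfolding good_def
    proof (intro exI conjI allI impI)
      show "length es = n" by fact
      fix i assume i: "i < n"
      show "es!i \<in> set_pmf (Enc (x!i))" using es(2) i by simp
      have "{j. j<n*m \<and> g j = i} = {j. j<n*m \<and> \<pi> j div m = i}" by (auto simp: g_def)
      then show "mset (es!i) = image_mset ((!) v) (mset_set {j. j<n*m \<and> g j = i})"
        using part_mset[OF es(1) lm es(3) es(4) i] by simp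
    qed
    ultimately show ?thesis by blast
  qed
  have fG: "f x \<in> G" and fg: "good x (f x)" if "x \<in> X" for x
    using someI_ex[OF ex[OF that]] unfolding f_def by auto
  have inj: "inj_on f X"
  proof
    fix x y assume x: "x \<in> X" and y: "y \<in> X" and e: "f x = f y"
    from fg[OF x] obtain es where es: "length es = n" "\<forall>i<n. es!i \<in> set_pmf (Enc (x!i)) \<and>
        mset (es!i) = image_mset ((!) v) (mset_set {j. j<n*m \<and> f x j = i})" unfolding good_def by blast
    from fg[OF y] obtain es' where es': "length es' = n" "\<forall>i<n. es'!i \<in> set_pmf (Enc (y!i)) \<and>
        mset (es'!i) = image_mset ((!) v) (mset_set {j. j<n*m \<and> f y j = i})" unfolding good_def by blast
    have lx: "length x = n" "length y = n" using x y by (auto simp: X_def)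
    show "x = y"
    proof (rule nth_equalityI)
      show "length x = length y" using lx by simp
      fix i assume "i < length x"
      then have i: "i < n" using lx by simp
      show "x ! i = y ! i"
        using unique_input[OF prot i, of "es!i" "x!i" "es'!i" "y!i"] es(2) es'(2) i e by simp
    qed
  qed
  have "card X \<le> card G"
    by (rule card_inj_on_le[OF inj]) (use fG in \<open>auto simp: G_def intro: finite_PiE\<close>)
  also have "card G = n ^ (n*m)" by (simp add: G_def card_PiE)
  finally show ?thesis by (simp add: X_def)
qed

lemma sv_finite:
  assumes prot: "is_aggregation_protocol n m l Enc A" and lx: "length x = n"
  shows "set_pmf (shuffled_view n m Enc x) \<subseteq> {v. set v \<subseteq> {..<l} \<and> length v = n*m}"
proof
  fix v assume "v \<in> set_pmf (shuffled_view n m Enc x)"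
  then obtain es \<pi> where es: "length es = n" "\<forall>i<n. es!i \<in> set_pmf (Enc (x!i))"
      "\<pi> permutes {..<n*m}" "v = permute_list \<pi> (concat es)"
      using sv_support lx by blast
  have msp: "\<forall>x. set_pmf (Enc x) \<subseteq> msg_space l m" using prot by (simp add: is_aggregation_protocol_def)
  have em: "\<forall>e\<in>set es. length e = m \<and> set e \<subseteq> {..<l}"
  proof
    fix e assume "e \<in> set es"
    then obtain j where "j < n" "e = es ! j" using es(1) by (auto simp: in_set_conv_nth)
    then have "e \<in> msg_space l m" using es(2) msp by blast
    then show "length e = m \<and> set e \<subseteq> {..<l}" by (auto simp: msg_space_def)
  qed
  then have lc: "length (concat es) = n*m" using length_concat_uniform[of es m] es(1) by auto
  then have "set v = set (concat es)" using es(3,4) by simp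
  then show "v \<in> {v. set v \<subseteq> {..<l} \<and> length v = n*m}" using em lc es(4) by auto
qed

lemma card_B:
  assumes that: "1 \<le> n"
  shows "card (B_set n (s::'a::{finite,field})) = CARD('a) ^ (n - 1)" (is "card ?B = _")
proof -
  have "bij_betw tl ?B {ys. set ys \<subseteq> UNIV \<and> length ys = n - 1}"
  proof (rule bij_betw_byWitness[where f' = "\<lambda>ys. (s - sum_list ys) # ys"])
    show "\<forall>a\<in>?B. (s - sum_list (tl a)) # tl a = a"
    proof
      fix a assume "a \<in> ?B"
      then have "length a = n" "sum_list a = s" by (auto simp: B_set_def)
      with that obtain h t where "a = h # t" by (cases a) auto
      with \<open>sum_list a = s\<close> show "(s - sum_list (tl a)) # tl a = a" by auto
    qed
    show "\<forall>a\<in>{ys. set ys \<subseteq> UNIV \<and> length ys = n - 1}. tl ((s - sum_list a) # a) = a" by simp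
    show "tl ` ?B \<subseteq> {ys. set ys \<subseteq> UNIV \<and> length ys = n - 1}" by (auto simp: B_set_def)
    show "(\<lambda>ys. (s - sum_list ys) # ys) ` {ys. set ys \<subseteq> UNIV \<and> length ys = n - 1} \<subseteq> ?B"
      using that by (auto simp: B_set_def)
  qed
  then have "card ?B = card {ys. set ys \<subseteq> (UNIV::'a set) \<and> length ys = n - 1}" by (rule bij_betw_same_card)
  also have "\<dots> = CARD('a) ^ (n - 1)" by (rule card_lists_length_eq) simp
  finally show ?thesis .
qed

theorem mainTheorem14:
  fixes Enc :: "'a::{finite, field} \<Rightarrow> nat list pmf"
    and A :: "nat list \<Rightarrow> 'a"
    and n m l :: nat
  assumes "1 \<le> n"
    and "is_aggregation_protocol n m l Enc A"
  shows "\<forall>s::'a. \<exists>x\<in>B_set n s. \<exists>x'\<in>B_set n s.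
           stat_dist (shuffled_view n m Enc x) (shuffled_view n m Enc x')
             \<ge> 1 - real n ^ (n * m) / real CARD('a) ^ (n - 1)"
proof
  fix s :: 'a
  note prot = assms(2)
  define B where "B = B_set n s"
  define S where "S = shuffled_view n m Enc"
  define x0 where "x0 = s # replicate (n - 1) (0::'a)"
  have x0B: "x0 \<in> B" using assms(1) by (simp add: x0_def B_def B_set_def zr)
  define P where "P = S x0"
  define V where "V = set_pmf P"
  have finV: "finite V"
  proof -
    have "V \<subseteq> {v. set v \<subseteq> {..<l} \<and> length v = n*m}"
      using sv_finite[OF prot, of x0] x0B by (simp add: V_def P_def S_def B_def B_set_def)
    then show ?thesis using finite_lists_length_eq[of "{..<l}" "n*m"] finite_subset by blast
  qed
  have finB: "finite B"
    by (rule finite_subset[OF _ finite_lists_length_eq[of "UNIV::'a set" n]]) (auto simp: B_def B_set_def)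
  have cardB: "card B = CARD('a) ^ (n - 1)" using card_B assms(1) by (simp add: B_def)
  have Bne: "card B > 0" using cardB by simp
  define F where "F x' = measure_pmf.prob P (set_pmf (S x'))" for x'
  have F_eq: "F x' = (\<Sum>v\<in>V. pmf P v * of_bool (v \<in> set_pmf (S x')))" for x'
  proof -
    have "F x' = measure_pmf.prob P (set_pmf (S x') \<inter> V)"
      unfolding F_def V_def by (rule measure_Int_set_pmf[symmetric])
    also have "\<dots> = sum (pmf P) (V \<inter> set_pmf (S x'))"
      using finV by (simp add: measure_measure_pmf_finite Int_commute)
    also have "\<dots> = (\<Sum>v\<in>V. if v \<in> set_pmf (S x') then pmf P v else 0)"
      using finV by (rule sum.inter_restrict)
    also have "\<dots> = (\<Sum>v\<in>V. pmf P v * of_bool (v \<in> set_pmf (S x')))"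
      by (rule sum.cong) auto
    finally show ?thesis .
  qed
  have cnt: "card (B \<inter> {x'. v \<in> set_pmf (S x')}) \<le> n ^ (n*m)" for v
  proof -
    have "B \<inter> {x'. v \<in> set_pmf (S x')} \<subseteq> {x. length x = n \<and> v \<in> set_pmf (shuffled_view n m Enc x)}"
      by (auto simp: B_def B_set_def S_def)
    moreover have "finite {x::'a list. length x = n \<and> v \<in> set_pmf (shuffled_view n m Enc x)}"
      by (rule finite_subset[OF _ finite_lists_length_eq[of "UNIV::'a set" n]]) auto
    ultimately have "card (B \<inter> {x'. v \<in> set_pmf (S x')}) \<le> card {x. length x = n \<and> v \<in> set_pmf (shuffled_view n m Enc x)}"
      by (rule card_mono[rotated])
    also have "\<dots> \<le> n ^ (n*m)" by (rule count_inputs[OF prot])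
    finally show ?thesis .
  qed
  have sumF: "(\<Sum>x'\<in>B. F x') \<le> real n ^ (n*m)"
  proof -
    have "(\<Sum>x'\<in>B. F x') = (\<Sum>v\<in>V. \<Sum>x'\<in>B. pmf P v * of_bool (v \<in> set_pmf (S x')))"
      unfolding F_eq by (rule sum.swap)
    also have "\<dots> = (\<Sum>v\<in>V. pmf P v * real (card (B \<inter> {x'. v \<in> set_pmf (S x')})))"
    proof (rule sum.cong[OF refl])
      fix v
      have "(\<Sum>x'\<in>B. pmf P v * of_bool (v \<in> set_pmf (S x'))) = pmf P v * (\<Sum>x'\<in>B. of_bool (v \<in> set_pmf (S x')))"
        by (simp only: sum_distrib_left)
      also have "(\<Sum>x'\<in>B. (of_bool (v \<in> set_pmf (S x')) :: real)) = real (card (B \<inter> {x'. v \<in> set_pmf (S x')}))"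
        using finB by (simp add: sum_of_bool_eq)
      finally show "(\<Sum>x'\<in>B. pmf P v * of_bool (v \<in> set_pmf (S x'))) = pmf P v * real (card (B \<inter> {x'. v \<in> set_pmf (S x')}))" .
    qed
    also have "\<dots> \<le> (\<Sum>v\<in>V. pmf P v * real n ^ (n*m))"
    proof (rule sum_mono)
      fix v
      have "real (card (B \<inter> {x'. v \<in> set_pmf (S x')})) \<le> real n ^ (n*m)"
        using cnt[of v] by (metis of_nat_le_iff of_nat_power)
      then show "pmf P v * real (card (B \<inter> {x'. v \<in> set_pmf (S x')})) \<le> pmf P v * real n ^ (n*m)"
        by (simp add: mult_left_mono)
    qed
    also have "\<dots> = real n ^ (n*m)"
      using sum_pmf_eq_1[OF finV] by (simp add: V_def sum_distrib_right[symmetric])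
    finally show ?thesis .
  qed
  obtain x' where x'B: "x' \<in> B" and Fx': "F x' \<le> real n ^ (n*m) / real (card B)"
  proof (rule ccontr)
    assume "\<not> thesis"
    with that have gt: "\<forall>x'\<in>B. F x' > real n ^ (n*m) / real (card B)" by force
    have "(\<Sum>x'\<in>B. real n ^ (n*m) / real (card B)) < (\<Sum>x'\<in>B. F x')"
      using Bne gt finB by (intro sum_strict_mono) auto
    then have "real n ^ (n*m) < (\<Sum>x'\<in>B. F x')" using Bne by simp
    with sumF show False by simp
  qed
  define E where "E = - set_pmf (S x')"
  have PE: "measure_pmf.prob P E = 1 - F x'"
    using measure_pmf.prob_compl[of "set_pmf (S x')" P] by (simp add: E_def F_def Compl_eq_Diff_UNIV)
  have QE: "measure_pmf.prob (S x') E = 0"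
    using measure_pmf.prob_compl[of "set_pmf (S x')" "S x'"]
    by (simp add: E_def Compl_eq_Diff_UNIV measure_pmf.prob_eq_1 AE_measure_pmf)
  have bdd: "bdd_above (range (\<lambda>E. \<bar>measure_pmf.prob P E - measure_pmf.prob (S x') E\<bar>))"
  proof (rule bdd_aboveI[where M = 1])
    fix y assume "y \<in> range (\<lambda>E. \<bar>measure_pmf.prob P E - measure_pmf.prob (S x') E\<bar>)"
    then obtain E' where "y = \<bar>measure_pmf.prob P E' - measure_pmf.prob (S x') E'\<bar>" by auto
    moreover have "measure_pmf.prob P E' \<le> 1" "measure_pmf.prob (S x') E' \<le> 1"
      "0 \<le> measure_pmf.prob P E'" "0 \<le> measure_pmf.prob (S x') E'" by auto
    ultimately show "y \<le> 1" by linarith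
  qed
  have "1 - real n ^ (n * m) / real CARD('a) ^ (n - 1) \<le> 1 - F x'"
    using Fx' cardB by simp
  also have "\<dots> = \<bar>measure_pmf.prob P E - measure_pmf.prob (S x') E\<bar>"
    using PE QE F_def by (simp add: measure_pmf.prob_le_1)
  also have "\<dots> \<le> stat_dist P (S x')"
    unfolding stat_dist_def by (rule cSUP_upper[OF UNIV_I bdd])
  finally show "\<exists>x\<in>B_set n s. \<exists>x'\<in>B_set n s.
           stat_dist (shuffled_view n m Enc x) (shuffled_view n m Enc x')
             \<ge> 1 - real n ^ (n * m) / real CARD('a) ^ (n - 1)"
    using x0B x'B by (auto simp: B_def P_def S_def)
qed
end
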